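(* Let $T\ge1$, $n\ge1$ with $nT\ge2$, $\mu\in\mathbb{R}$, $\sigma>0$, $z^*\in\mathbb{R}$, $\tau\in\{1,\dots,T\}$. Under $\mathbf{H_0}$ the real numbers $X_{t,k}$ ($t\le T$, $k\le n$) are i.i.d. $\mathcal{N}(\mu,\sigma^2)$; under $\mathbf{H_1^\tau}$ they are generated the same way and then $X_{\tau,J}$ is replaced by $z^*$, with $J$ uniform on $\{1,\dots,n\}$ independent of the data. Let $\hat\mu_T=\frac{1}{nT}\sum_{t=1}^T\sum_{k=1}^nX_{t,k}$, $W=\hat\mu_T-\mu$, and \[ L_{\mathrm{FO}}=-\frac12\log\Big(\frac{nT-1}{nT}\Big)-\frac{nT}{2(nT-1)\sigma^2}W^2+\frac{nT(z^*-\mu)}{(nT-1)\sigma^2}W-\frac{(z^*-\mu)^2}{2(nT-1)\sigma^2}. \] Let $\beta_{\mathrm{FO}}(\gamma)=\mathbb{P}_{\mathbf{H_1^\tau}}(L_{\mathrm{FO}}<\gamma)$, $\gamma^{(T)}_{\max}=\frac12\big[\frac{(z^*-\mu)^2}{\sigma^2}-\log\big(\frac{nT-1}{nT}\big)\big]$, $m^*=\frac{(z^*-\mu)^2}{\sigma^2}$, $a_T=\sqrt{m^*nT}$, $b_T(\gamma)=\sqrt{(nT-1)\big(m^*-\log(1-\frac1{nT})-2\gamma\big)}$. Then for every $\gamma\le\gamma^{(T)}_{\max}$, \[ \beta_{\mathrm{FO}}(\gamma)=\Phi\Big(a_T\sqrt{\tfrac{nT-1}{nT}}-b_T(\gamma)\sqrt{\tfrac{nT}{nT-1}}\Big)+\Phi\Big(-a_T\sqrt{\tfrac{nT-1}{nT}}-b_T(\gamma)\sqrt{\tfrac{nT}{nT-1}}\Big),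 \] where $\Phi$ is the standard normal cumulative distribution function.
   Context: $L_{\mathrm{FO}}$ is the log likelihood ratio statistic of a membership test that only observes the final cumulative mean; $\beta_{\mathrm{FO}}(\gamma)$ is its Type II error at threshold $\gamma$. *)

theory Defs
  imports "HOL-Probability.Probability"
begin

definition Phi :: "real \<Rightarrow> real" where
  "Phi x = cdf (density lborel std_normal_density) x"

definition idx :: "nat \<Rightarrow> nat \<Rightarrow> (nat \<times> nat) set" where
  "idx T n = {1..T} \<times> {1..n}"

definition data_measure :: "nat \<Rightarrow> nat \<Rightarrow> real \<Rightarrow> real \<Rightarrow> ((nat \<times> nat) \<Rightarrow> real) measure" where
  "data_measure T n \<mu> \<sigma> = PiM (idx T n) (\<lambda>_. density lborel (normal_density \<mu> \<sigma>))"

text \<open>Under H1^tau: sample J uniform on 1..n independently of the data X, and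
  the observed data is X with entry (tau, J) replaced by z*.\<close>
definition H1_measure :: "nat \<Rightarrow> nat \<Rightarrow> real \<Rightarrow> real \<Rightarrow> (nat \<times> ((nat \<times> nat) \<Rightarrow> real)) measure" where
  "H1_measure T n \<mu> \<sigma> = measure_pmf (pmf_of_set {1..n}) \<Otimes>\<^sub>M data_measure T n \<mu> \<sigma>"

definition H1_data :: "nat \<Rightarrow> real \<Rightarrow> nat \<times> ((nat \<times> nat) \<Rightarrow> real) \<Rightarrow> ((nat \<times> nat) \<Rightarrow> real)" where
  "H1_data \<tau> zs \<omega> = (snd \<omega>)((\<tau>, fst \<omega>) := zs)"

definition mu_hat :: "nat \<Rightarrow> nat \<Rightarrow> ((nat \<times> nat) \<Rightarrow> real) \<Rightarrow> real" where
  "mu_hat T n X = (\<Sum>t=1..T. \<Sum>k=1..n. X (t, k)) / real (n * T)"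

definition L_FO :: "nat \<Rightarrow> nat \<Rightarrow> real \<Rightarrow> real \<Rightarrow> real \<Rightarrow> real \<Rightarrow> real" where
  "L_FO T n \<mu> \<sigma> zs W =
     (let N = real (n * T) in
       - (1/2) * ln ((N - 1) / N)
       - N / (2 * (N - 1) * \<sigma>\<^sup>2) * W\<^sup>2
       + N * (zs - \<mu>) / ((N - 1) * \<sigma>\<^sup>2) * W
       - (zs - \<mu>)\<^sup>2 / (2 * (N - 1) * \<sigma>\<^sup>2))"

definition beta_FO :: "nat \<Rightarrow> nat \<Rightarrow> real \<Rightarrow> real \<Rightarrow> real \<Rightarrow> nat \<Rightarrow> real \<Rightarrow> real" where
  "beta_FO T n \<mu> \<sigma> zs \<tau> \<gamma> =
     measure (H1_measure T n \<mu> \<sigma>)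
       {\<omega> \<in> space (H1_measure T n \<mu> \<sigma>).
          L_FO T n \<mu> \<sigma> zs (mu_hat T n (H1_data \<tau> zs \<omega>) - \<mu>) < \<gamma>}"

definition gamma_max :: "nat \<Rightarrow> nat \<Rightarrow> real \<Rightarrow> real \<Rightarrow> real \<Rightarrow> real" where
  "gamma_max T n \<mu> \<sigma> zs =
     (1/2) * ((zs - \<mu>)\<^sup>2 / \<sigma>\<^sup>2 - ln ((real (n * T) - 1) / real (n * T)))"

definition m_star :: "real \<Rightarrow> real \<Rightarrow> real \<Rightarrow> real" where
  "m_star \<mu> \<sigma> zs = (zs - \<mu>)\<^sup>2 / \<sigma>\<^sup>2"

definition a_T :: "nat \<Rightarrow> nat \<Rightarrow> real \<Rightarrow> real \<Rightarrow> real \<Rightarrow> real" where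
  "a_T T n \<mu> \<sigma> zs = sqrt (m_star \<mu> \<sigma> zs * real (n * T))"

definition b_T :: "nat \<Rightarrow> nat \<Rightarrow> real \<Rightarrow> real \<Rightarrow> real \<Rightarrow> real \<Rightarrow> real" where
  "b_T T n \<mu> \<sigma> zs \<gamma> =
     sqrt ((real (n * T) - 1) * (m_star \<mu> \<sigma> zs - ln (1 - 1 / real (n * T)) - 2 * \<gamma>))"

end

theory Submission
  imports Defs
begin

lemma pim_normal_indep:
  fixes I :: "'i set" and \<mu> \<sigma> :: real
  assumes "finite I" "I \<noteq> {}" "\<sigma> > 0"
  defines "M \<equiv> PiM I (\<lambda>_. density lborel (normal_density \<mu> \<sigma>))"
  shows "prob_space M"
    and "prob_space.indep_vars M (\<lambda>_. borel) (\<lambda>i \<omega>. \<omega> i) I"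
    and "\<And>i. i \<in> I \<Longrightarrow> distributed M lborel (\<lambda>\<omega>. \<omega> i) (normal_density \<mu> \<sigma>)"
proof -
  let ?N = "density lborel (normal_density \<mu> \<sigma>)"
  have PN: "prob_space ?N" by (rule prob_space_normal_density) (rule assms(3))
  show P: "prob_space M" unfolding M_def by (rule prob_space_PiM) (rule PN)
  interpret P: prob_space M by (rule P)
  have comp: "distr M ?N (\<lambda>\<omega>. \<omega> i) = ?N" if "i \<in> I" for i
    unfolding M_def by (rule distr_PiM_component) (use PN that in auto)
  have comp2: "distr M borel (\<lambda>\<omega>. \<omega> i) = ?N" if "i \<in> I" for i
  proof -
    have "distr M borel (\<lambda>\<omega>. \<omega> i) = distr M ?N (\<lambda>\<omega>. \<omega> i)"
      by (rule distr_cong) auto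
    then show ?thesis using comp[OF that] by simp
  qed
  have comp3: "distr M lborel (\<lambda>\<omega>. \<omega> i) = ?N" if "i \<in> I" for i
  proof -
    have "distr M lborel (\<lambda>\<omega>. \<omega> i) = distr M ?N (\<lambda>\<omega>. \<omega> i)"
      by (rule distr_cong) auto
    then show ?thesis using comp[OF that] by simp
  qed
  have meas: "(\<lambda>\<omega>. \<omega> i) \<in> borel_measurable M" if "i \<in> I" for i
    unfolding M_def using that by measurable
  show "P.indep_vars (\<lambda>_. borel) (\<lambda>i \<omega>. \<omega> i) I"
  proof (subst P.indep_vars_iff_distr_eq_PiM')
    show "I \<noteq> {}" by fact
    show "\<And>i. i \<in> I \<Longrightarrow> (\<lambda>\<omega>. \<omega> i) \<in> measurable M borel" using meas by auto
    have "(\<Pi>\<^sub>M i\<in>I. distr M borel (\<lambda>\<omega>. \<omega> i)) = M"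
      unfolding M_def by (rule PiM_cong) (auto simp: comp2[unfolded M_def])
    moreover have "distr M (\<Pi>\<^sub>M i\<in>I. borel) (\<lambda>x. restrict (\<lambda>i. x i) I) = distr M M (\<lambda>x. x)"
      by (rule distr_cong) (auto simp: M_def space_PiM intro!: sets_PiM_cong)
    ultimately show "distr M (\<Pi>\<^sub>M i\<in>I. borel) (\<lambda>x. restrict (\<lambda>i. x i) I) = (\<Pi>\<^sub>M i\<in>I. distr M borel (\<lambda>\<omega>. \<omega> i))"
      by simp
  qed
  show "distributed M lborel (\<lambda>\<omega>. \<omega> i) (normal_density \<mu> \<sigma>)" if "i \<in> I" for i
    unfolding distributed_def using comp3[OF that] meas[OF that]
    by (auto simp: normal_density_nonneg)
qed

lemma std_normal_lt:
  assumes P: "prob_space M" and D: "distributed M lborel Z std_normal_density"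
  shows "measure M {\<omega>\<in>space M. Z \<omega> < x} = Phi x"
proof -
  let ?D = "density lborel std_normal_density"
  have Zm: "Z \<in> borel_measurable M" using distributed_measurable[OF D] by simp
  have DD: "distr M lborel Z = ?D" using D by (rule distributed_distr_eq_density)
  have "measure M {\<omega>\<in>space M. Z \<omega> < x} = measure (distr M lborel Z) {..<x}"
    using Zm by (subst measure_distr) (auto intro!: arg_cong[where f="measure M"])
  also have "\<dots> = measure ?D {..<x}" using DD by simp
  also have "emeasure ?D {..<x} = emeasure ?D {..x}"
  proof (rule emeasure_eq_AE)
    show "AE y in ?D. (y \<in> {..<x}) = (y \<in> {..x})"
      by (subst AE_density) (auto intro: eventually_mono[OF AE_lborel_singleton[of x]])
  qed auto
  then have "measure ?D {..<x} = measure ?D {..x}" by (simp add: measure_def)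
  finally show ?thesis by (simp add: Phi_def cdf_def2)
qed

lemma sum_normal_dist:
  fixes I :: "'i set" and \<mu> \<sigma> :: real
  assumes "finite I" "J \<subseteq> I" "J \<noteq> {}" "\<sigma> > 0"
  defines "M \<equiv> PiM I (\<lambda>_. density lborel (normal_density \<mu> \<sigma>))"
  shows "distributed M lborel (\<lambda>\<omega>. \<Sum>i\<in>J. \<omega> i) (normal_density (real (card J) * \<mu>) (sqrt (real (card J)) * \<sigma>))"
proof -
  have I: "I \<noteq> {}" using assms by auto
  note F = pim_normal_indep[OF assms(1) I assms(4), where \<mu>=\<mu>, folded M_def]
  interpret P: prob_space M by (rule F(1))
  have fJ: "finite J" using assms finite_subset by auto
  have "distributed M lborel (\<lambda>\<omega>. \<Sum>i\<in>J. \<omega> i) (normal_density (\<Sum>i\<in>J. \<mu>) (sqrt (\<Sum>i\<in>J. \<sigma>\<^sup>2)))"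
    by (rule P.sum_indep_normal[OF fJ assms(3) P.indep_vars_subset[OF F(2) assms(2)]])
       (use assms F(3) in auto)
  moreover have "sqrt (\<Sum>i\<in>J. \<sigma>\<^sup>2) = sqrt (real (card J)) * \<sigma>"
    using assms by (simp add: real_sqrt_mult)
  ultimately show ?thesis by (simp add: mult.commute)
qed

lemma normal_probs:
  assumes P: "prob_space M" and D: "distributed M lborel S (normal_density m s)" and s: "s > 0"
  shows "measure M {\<omega>\<in>space M. S \<omega> < a} = Phi ((a - m) / s)"
    and "measure M {\<omega>\<in>space M. a < S \<omega>} = Phi ((m - a) / s)"
proof -
  interpret P: prob_space M by (rule P)
  have D1: "distributed M lborel (\<lambda>x. (- m / s) + (1/s) * S x) (normal_density ((- m / s) + (1/s) * m) (\<bar>1/s\<bar> * s))"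
    by (rule P.normal_density_affine[OF D s]) (use s in auto)
  have "(- m / s) + (1/s) * m = 0" "\<bar>1/s\<bar> * s = 1" using s by (auto simp: field_simps)
  with D1 have D1': "distributed M lborel (\<lambda>x. (- m / s) + (1/s) * S x) std_normal_density" by simp
  have D2: "distributed M lborel (\<lambda>x. (m / s) + (-1/s) * S x) (normal_density ((m / s) + (-1/s) * m) (\<bar>-1/s\<bar> * s))"
    by (rule P.normal_density_affine[OF D s]) (use s in auto)
  have "(m / s) + (-1/s) * m = 0" "\<bar>-1/s\<bar> * s = 1" using s by (auto simp: field_simps)
  with D2 have D2': "distributed M lborel (\<lambda>x. (m / s) + (-1/s) * S x) std_normal_density" by simp
  have "{\<omega>\<in>space M. S \<omega> < a} = {\<omega>\<in>space M. (- m / s) + (1/s) * S \<omega> < (a - m) / s}"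
    using s by (auto simp: field_simps)
  then show "measure M {\<omega>\<in>space M. S \<omega> < a} = Phi ((a - m) / s)"
    using std_normal_lt[OF P D1'] by simp
  have "{\<omega>\<in>space M. a < S \<omega>} = {\<omega>\<in>space M. (m / s) + (-1/s) * S \<omega> < (m - a) / s}"
    using s by (auto simp: field_simps)
  then show "measure M {\<omega>\<in>space M. a < S \<omega>} = Phi ((m - a) / s)"
    using std_normal_lt[OF P D2'] by simp
qed

lemma key_alg:
  fixes N \<sigma> \<mu> zs \<gamma> S :: real
  assumes N: "N > 1" and s: "\<sigma> > 0"
    and c: "c = (zs - \<mu>)\<^sup>2 / \<sigma>\<^sup>2 - ln ((N - 1) / N) - 2 * \<gamma>" and c0: "c \<ge> 0"
  shows "(- (1/2) * ln ((N - 1) / N) - N / (2 * (N - 1) * \<sigma>\<^sup>2) * ((S + zs) / N - \<mu>)\<^sup>2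
       + N * (zs - \<mu>) / ((N - 1) * \<sigma>\<^sup>2) * ((S + zs) / N - \<mu>)
       - (zs - \<mu>)\<^sup>2 / (2 * (N - 1) * \<sigma>\<^sup>2) < \<gamma>) \<longleftrightarrow>
     (S < (N - 1) * zs - \<sigma> * sqrt (c * (N - 1) * N) \<or> (N - 1) * zs + \<sigma> * sqrt (c * (N - 1) * N) < S)"
proof -
  define u where "u = S - (N - 1) * zs"
  define K where "K = - (1/2) * ln ((N - 1) / N) + (zs - \<mu>)\<^sup>2 / (2 * \<sigma>\<^sup>2)"
  have W: "(S + zs) / N - \<mu> = u / N + (zs - \<mu>)" using N unfolding u_def by (simp add: field_simps)
  have gen: "- N / (2 * (N - 1) * \<sigma>\<^sup>2) * (u / N + d)\<^sup>2 + N * d / ((N - 1) * \<sigma>\<^sup>2) * (u / N + d)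
       - d\<^sup>2 / (2 * (N - 1) * \<sigma>\<^sup>2) = d\<^sup>2 / (2 * \<sigma>\<^sup>2) - u\<^sup>2 / (2 * N * (N - 1) * \<sigma>\<^sup>2)" for d
  proof -
    have "N - 1 \<noteq> 0" "N \<noteq> 0" "\<sigma> \<noteq> 0" using N s by auto
    then show ?thesis by (simp add: divide_simps power2_eq_square) (simp add: algebra_simps)
  qed
  have id: "- (1/2) * ln ((N - 1) / N) - N / (2 * (N - 1) * \<sigma>\<^sup>2) * ((S + zs) / N - \<mu>)\<^sup>2
       + N * (zs - \<mu>) / ((N - 1) * \<sigma>\<^sup>2) * ((S + zs) / N - \<mu>)
       - (zs - \<mu>)\<^sup>2 / (2 * (N - 1) * \<sigma>\<^sup>2) = K - u\<^sup>2 / (2 * N * (N - 1) * \<sigma>\<^sup>2)"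
    unfolding W K_def using gen[of "zs - \<mu>"] by simp
  have pos: "2 * N * (N - 1) * \<sigma>\<^sup>2 > 0" using N s by simp
  have "K - u\<^sup>2 / (2 * N * (N - 1) * \<sigma>\<^sup>2) < \<gamma> \<longleftrightarrow> (K - \<gamma>) * (2 * N * (N - 1) * \<sigma>\<^sup>2) < u\<^sup>2"
  proof -
    have "K - x / D < \<gamma> \<longleftrightarrow> (K - \<gamma>) * D < x" if "D > 0" for x D :: real
      using that pos_less_divide_eq[OF that, of "K - \<gamma>" x] by linarith
    then show ?thesis using pos by blast
  qed
  also have "(K - \<gamma>) * (2 * N * (N - 1) * \<sigma>\<^sup>2) = (\<sigma> * sqrt (c * (N - 1) * N))\<^sup>2"
  proof -
    have "2 * (K - \<gamma>) = c" unfolding K_def c using s by (simp add: field_simps)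
    moreover have "(\<sigma> * sqrt (c * (N - 1) * N))\<^sup>2 = \<sigma>\<^sup>2 * (c * (N - 1) * N)"
      using N c0 by (simp add: power_mult_distrib)
    moreover have "(K - \<gamma>) * (2 * N * (N - 1) * \<sigma>\<^sup>2) = (2 * (K - \<gamma>)) * (\<sigma>\<^sup>2 * ((N - 1) * N))"
      by (simp add: algebra_simps)
    ultimately show ?thesis by (simp add: mult_ac)
  qed
  also have "(\<sigma> * sqrt (c * (N - 1) * N))\<^sup>2 < u\<^sup>2 \<longleftrightarrow> \<sigma> * sqrt (c * (N - 1) * N) < \<bar>u\<bar>"
  proof -
    define R where "R = \<sigma> * sqrt (c * (N - 1) * N)"
    have R0: "R \<ge> 0" unfolding R_def using s c0 N by simp
    have "R\<^sup>2 < u\<^sup>2 \<longleftrightarrow> \<not> \<bar>u\<bar> \<le> \<bar>R\<bar>" using abs_le_square_iff[of u R] by auto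
    then have "R\<^sup>2 < u\<^sup>2 \<longleftrightarrow> R < \<bar>u\<bar>" using R0 by auto
    then show ?thesis unfolding R_def .
  qed
  also have "\<dots> \<longleftrightarrow> (S < (N - 1) * zs - \<sigma> * sqrt (c * (N - 1) * N) \<or> (N - 1) * zs + \<sigma> * sqrt (c * (N - 1) * N) < S)"
    unfolding u_def by auto
  finally show ?thesis using id by simp
qed

lemma slice_prob:
  fixes T n \<tau> j :: nat and \<mu> \<sigma> zs \<gamma> :: real
  assumes "T \<ge> 1" and "n \<ge> 1" and NT: "n * T \<ge> 2"
    and s: "\<sigma> > 0" and tau: "\<tau> \<in> {1..T}" and j: "j \<in> {1..n}"
    and g: "\<gamma> \<le> gamma_max T n \<mu> \<sigma> zs"
  defines "N \<equiv> real (n * T)"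
  defines "c \<equiv> m_star \<mu> \<sigma> zs - ln ((N - 1) / N) - 2 * \<gamma>"
  shows "measure (data_measure T n \<mu> \<sigma>) {X \<in> space (data_measure T n \<mu> \<sigma>).
            L_FO T n \<mu> \<sigma> zs (mu_hat T n (X((\<tau>, j) := zs)) - \<mu>) < \<gamma>}
   = Phi (sqrt (N - 1) * (zs - \<mu>) / \<sigma> - sqrt (c * N)) + Phi (- (sqrt (N - 1) * (zs - \<mu>) / \<sigma>) - sqrt (c * N))"
proof -
  define I where "I = idx T n"
  define p where "p = (\<tau>, j)"
  define J where "J = I - {p}"
  define M where "M = data_measure T n \<mu> \<sigma>"
  define S where "S = (\<lambda>X::(nat \<times> nat) \<Rightarrow> real. \<Sum>i\<in>J. X i)"
  have fI: "finite I" unfolding I_def idx_def by simp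
  have pI: "p \<in> I" unfolding I_def idx_def p_def using tau j by auto
  have cI: "card I = n * T" unfolding I_def idx_def by (simp add: card_cartesian_product)
  have cJ: "card J = n * T - 1" unfolding J_def using pI fI cI by (simp add: card_Diff_singleton)
  have N2: "real (n * T) \<ge> 2" using NT by (metis of_nat_numeral of_nat_le_iff)
  have N1: "N > 1" unfolding N_def using N2 by linarith
  have rcJ: "real (card J) = N - 1" unfolding cJ N_def using NT by (simp add: of_nat_diff del: of_nat_mult)
  have Jne: "J \<noteq> {}" proof
    assume "J = {}" then have "card J = 0" by simp
    with cJ NT show False by simp
  qed
  have JI: "J \<subseteq> I" unfolding J_def by auto
  have M: "M = PiM I (\<lambda>_. density lborel (normal_density \<mu> \<sigma>))"
    unfolding M_def data_measure_def I_def ..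
  have PM: "prob_space M" unfolding M using pim_normal_indep(1)[OF fI _ s] pI by auto
  interpret P: prob_space M by (rule PM)
  have D: "distributed M lborel S (normal_density ((N - 1) * \<mu>) (sqrt (N - 1) * \<sigma>))"
    using sum_normal_dist[OF fI JI Jne s, where \<mu>=\<mu>] unfolding M[symmetric] S_def rcJ .
  have Sm[measurable]: "S \<in> borel_measurable M" using distributed_measurable[OF D] by simp
  have mh: "mu_hat T n (X(p := zs)) = (S X + zs) / N" for X
  proof -
    have "(\<Sum>t=1..T. \<Sum>k=1..n. (X(p := zs)) (t, k)) = (\<Sum>i\<in>I. (X(p := zs)) i)"
      unfolding I_def idx_def by (simp add: sum.cartesian_product)
    also have "\<dots> = (X(p := zs)) p + (\<Sum>i\<in>I - {p}. (X(p := zs)) i)"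
      by (rule sum.remove[OF fI pI])
    also have "(\<Sum>i\<in>I - {p}. (X(p := zs)) i) = S X" unfolding S_def J_def by (rule sum.cong) auto
    finally show ?thesis unfolding mu_hat_def N_def by simp
  qed
  have c0: "c \<ge> 0" using g unfolding c_def gamma_max_def m_star_def N_def by simp
  have cc: "c = (zs - \<mu>)\<^sup>2 / \<sigma>\<^sup>2 - ln ((N - 1) / N) - 2 * \<gamma>" unfolding c_def m_star_def ..
  define r where "r = \<sigma> * sqrt (c * (N - 1) * N)"
  have r0: "r \<ge> 0" unfolding r_def using s c0 N1 by simp
  have set_eq: "{X \<in> space M. L_FO T n \<mu> \<sigma> zs (mu_hat T n (X((\<tau>, j) := zs)) - \<mu>) < \<gamma>}
     = {X \<in> space M. S X < (N - 1) * zs - r} \<union> {X \<in> space M. (N - 1) * zs + r < S X}"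
    using key_alg[OF N1 s cc c0] unfolding r_def L_FO_def Let_def N_def[symmetric] p_def[symmetric] mh
    by auto
  define q where "q = sqrt (N - 1)"
  have q0: "q > 0" unfolding q_def using N1 by simp
  have q2: "N - 1 = q\<^sup>2" unfolding q_def using N1 by simp
  have rq: "r = \<sigma> * q * sqrt (c * N)" unfolding r_def q_def
    by (simp add: real_sqrt_mult[symmetric] mult_ac)
  have g1: "(q\<^sup>2 * zs - \<sigma> * q * w - q\<^sup>2 * \<mu>) / (q * \<sigma>) = q * (zs - \<mu>) / \<sigma> - w" for w
    using q0 s by (simp add: field_simps power2_eq_square)
  have g2: "(q\<^sup>2 * \<mu> - (q\<^sup>2 * zs + \<sigma> * q * w)) / (q * \<sigma>) = - (q * (zs - \<mu>) / \<sigma>) - w" for w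
    using q0 s by (simp add: field_simps power2_eq_square)
  have "measure M ({X \<in> space M. S X < (N - 1) * zs - r} \<union> {X \<in> space M. (N - 1) * zs + r < S X})
     = measure M {X \<in> space M. S X < (N - 1) * zs - r} + measure M {X \<in> space M. (N - 1) * zs + r < S X}"
    by (rule P.finite_measure_Union) (use r0 in auto)
  also have "\<dots> = Phi (((N - 1) * zs - r - (N - 1) * \<mu>) / (sqrt (N - 1) * \<sigma>))
      + Phi (((N - 1) * \<mu> - ((N - 1) * zs + r)) / (sqrt (N - 1) * \<sigma>))"
    using normal_probs[OF PM D] s N1 by simp
  also have "((N - 1) * zs - r - (N - 1) * \<mu>) / (sqrt (N - 1) * \<sigma>) = sqrt (N - 1) * (zs - \<mu>) / \<sigma> - sqrt (c * N)"
    using g1[of "sqrt (c * N)", folded q2] unfolding rq q_def[symmetric] .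
  also have "((N - 1) * \<mu> - ((N - 1) * zs + r)) / (sqrt (N - 1) * \<sigma>) = - (sqrt (N - 1) * (zs - \<mu>) / \<sigma>) - sqrt (c * N)"
    using g2[of "sqrt (c * N)", folded q2] unfolding rq q_def[symmetric] .
  finally show ?thesis using set_eq unfolding M_def by simp
qed

lemma meas_A:
  fixes T n \<tau> :: nat and \<mu> \<sigma> zs \<gamma> :: real
  shows "{\<omega> \<in> space (H1_measure T n \<mu> \<sigma>).
          L_FO T n \<mu> \<sigma> zs (mu_hat T n (H1_data \<tau> zs \<omega>) - \<mu>) < \<gamma>} \<in> sets (H1_measure T n \<mu> \<sigma>)"
proof -
  let ?H = "H1_measure T n \<mu> \<sigma>"
  have fm[measurable]: "fst \<in> measurable ?H (count_space UNIV)"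
  proof -
    have "measurable ?H (count_space UNIV) = measurable ?H (measure_pmf (pmf_of_set {1..n}))"
      by (rule measurable_cong_sets) simp_all
    moreover have "fst \<in> measurable ?H (measure_pmf (pmf_of_set {1..n}))"
      unfolding H1_measure_def by (rule measurable_fst)
    ultimately show ?thesis by simp
  qed
  have comp: "(\<lambda>\<omega>. H1_data \<tau> zs \<omega> (t, k)) \<in> borel_measurable ?H" if "t \<in> {1..T}" "k \<in> {1..n}" for t k
  proof -
    have e: "(\<lambda>\<omega>. H1_data \<tau> zs \<omega> (t, k)) = (\<lambda>\<omega>. if t = \<tau> \<and> fst \<omega> = k then zs else snd \<omega> (t, k))"
      by (auto simp: H1_data_def fun_eq_iff)
    have [measurable]: "(\<lambda>\<omega>. snd \<omega> (t, k)) \<in> borel_measurable ?H"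
      unfolding H1_measure_def data_measure_def using that by (simp add: idx_def)
    show ?thesis unfolding e by measurable
  qed
  have "(\<lambda>\<omega>. mu_hat T n (H1_data \<tau> zs \<omega>)) \<in> borel_measurable ?H"
    unfolding mu_hat_def
    by (intro borel_measurable_divide borel_measurable_const borel_measurable_sum comp) auto
  note [measurable] = this
  show ?thesis unfolding L_FO_def Let_def by measurable
qed

theorem lemma3p8:
  fixes T n \<tau> :: nat and \<mu> \<sigma> zs \<gamma> :: real
  assumes "T \<ge> 1" and "n \<ge> 1" and "n * T \<ge> 2"
    and "\<sigma> > 0" and "\<tau> \<in> {1..T}"
    and "\<gamma> \<le> gamma_max T n \<mu> \<sigma> zs"
  shows "beta_FO T n \<mu> \<sigma> zs \<tau> \<gamma> =
     Phi (a_T T n \<mu> \<sigma> zs * sqrt ((real (n * T) - 1) / real (n * T))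
          - b_T T n \<mu> \<sigma> zs \<gamma> * sqrt (real (n * T) / (real (n * T) - 1)))
   + Phi (- a_T T n \<mu> \<sigma> zs * sqrt ((real (n * T) - 1) / real (n * T))
          - b_T T n \<mu> \<sigma> zs \<gamma> * sqrt (real (n * T) / (real (n * T) - 1)))"
proof -
  define N where "N = real (n * T)"
  define c where "c = m_star \<mu> \<sigma> zs - ln ((N - 1) / N) - 2 * \<gamma>"
  define V where "V = Phi (sqrt (N - 1) * (zs - \<mu>) / \<sigma> - sqrt (c * N)) + Phi (- (sqrt (N - 1) * (zs - \<mu>) / \<sigma>) - sqrt (c * N))"
  have N2: "real (n * T) \<ge> 2" using assms(3) by (metis of_nat_numeral of_nat_le_iff)
  have N1: "N > 1" unfolding N_def using N2 by linarith
  have s: "\<sigma> > 0" by fact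
  have c0: "c \<ge> 0" using assms(6) unfolding c_def gamma_max_def m_star_def N_def by simp
  let ?H = "H1_measure T n \<mu> \<sigma>"
  let ?M = "data_measure T n \<mu> \<sigma>"
  let ?U = "pmf_of_set {1..n::nat}"
  let ?A = "{\<omega> \<in> space ?H. L_FO T n \<mu> \<sigma> zs (mu_hat T n (H1_data \<tau> zs \<omega>) - \<mu>) < \<gamma>}"
  have PM: "prob_space ?M" unfolding data_measure_def
    by (rule prob_space_PiM) (rule prob_space_normal_density[OF s])
  interpret P: prob_space ?M by (rule PM)
  have Une: "{1..n} \<noteq> {}" using assms(2) by auto
  have slice: "emeasure ?M (Pair j -` ?A) = ennreal V" if j: "j \<in> {1..n}" for j
  proof -
    have "Pair j -` ?A = {X \<in> space ?M. L_FO T n \<mu> \<sigma> zs (mu_hat T n (X((\<tau>, j) := zs)) - \<mu>) < \<gamma>}"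
      by (auto simp: H1_measure_def space_pair_measure H1_data_def)
    then show ?thesis
      using slice_prob[OF assms(1,2,3) s assms(5) j assms(6)] P.emeasure_eq_measure
      unfolding V_def c_def N_def by simp
  qed
  have "emeasure ?H ?A = (\<integral>\<^sup>+ j. emeasure ?M (Pair j -` ?A) \<partial>measure_pmf ?U)"
    unfolding H1_measure_def
    by (rule P.emeasure_pair_measure_alt) (rule meas_A[unfolded H1_measure_def])
  also have "\<dots> = (\<integral>\<^sup>+ j. ennreal V \<partial>measure_pmf ?U)"
  proof (rule nn_integral_cong_AE)
    show "AE j in measure_pmf ?U. emeasure ?M (Pair j -` ?A) = ennreal V"
      unfolding AE_measure_pmf_iff set_pmf_of_set[OF Une finite_atLeastAtMost] using slice by blast
  qed
  also have "\<dots> = ennreal V" by (simp add: measure_pmf.emeasure_space_1)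
  finally have eA: "emeasure ?H ?A = ennreal V" .
  have V0: "V \<ge> 0"
  proof -
    have j1: "(1::nat) \<in> {1..n}" using assms(2) by simp
    have "measure ?M {X \<in> space ?M. L_FO T n \<mu> \<sigma> zs (mu_hat T n (X((\<tau>, 1) := zs)) - \<mu>) < \<gamma>} = V"
      using slice_prob[OF assms(1,2,3) s assms(5) j1 assms(6)] unfolding V_def c_def N_def by simp
    then show ?thesis by (rule ord_le_eq_trans[OF measure_nonneg])
  qed
  have beta: "beta_FO T n \<mu> \<sigma> zs \<tau> \<gamma> = V"
    unfolding beta_FO_def measure_def eA using V0 by simp
  have ha: "a_T T n \<mu> \<sigma> zs * sqrt ((real (n * T) - 1) / real (n * T)) = \<bar>zs - \<mu>\<bar> / \<sigma> * sqrt (N - 1)"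
  proof -
    have "a_T T n \<mu> \<sigma> zs * sqrt ((real (n * T) - 1) / real (n * T))
        = sqrt ((zs - \<mu>)\<^sup>2 / \<sigma>\<^sup>2 * N * ((N - 1) / N))"
      unfolding a_T_def m_star_def N_def by (simp add: real_sqrt_mult[symmetric])
    also have "(zs - \<mu>)\<^sup>2 / \<sigma>\<^sup>2 * N * ((N - 1) / N) = ((zs - \<mu>) / \<sigma>)\<^sup>2 * (N - 1)"
      using N1 s by (simp add: field_simps power_divide)
    finally show ?thesis using s by (simp add: real_sqrt_mult)
  qed
  have hb: "b_T T n \<mu> \<sigma> zs \<gamma> * sqrt (real (n * T) / (real (n * T) - 1)) = sqrt (c * N)"
  proof -
    have l: "1 - 1 / N = (N - 1) / N" using N1 by (simp add: field_simps)
    have "b_T T n \<mu> \<sigma> zs \<gamma> * sqrt (real (n * T) / (real (n * T) - 1)) = sqrt ((N - 1) * c * (N / (N - 1)))"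
      unfolding b_T_def c_def N_def[symmetric] l by (simp add: real_sqrt_mult[symmetric])
    also have "(N - 1) * c * (N / (N - 1)) = c * N" using N1 by (simp add: field_simps)
    finally show ?thesis .
  qed
  show ?thesis
  proof (cases "zs - \<mu> \<ge> 0")
    case True
    then have hx: "\<bar>zs - \<mu>\<bar> / \<sigma> * sqrt (N - 1) = sqrt (N - 1) * (zs - \<mu>) / \<sigma>"
      by (simp add: field_simps)
    show ?thesis unfolding beta mult_minus_left ha hb V_def hx ..
  next
    case False
    then have "\<bar>zs - \<mu>\<bar> = - (zs - \<mu>)" by simp
    have hx: "\<bar>zs - \<mu>\<bar> / \<sigma> * sqrt (N - 1) = - (sqrt (N - 1) * (zs - \<mu>) / \<sigma>)"
      using \<open>\<bar>zs - \<mu>\<bar> = - (zs - \<mu>)\<close> s by (simp add: field_simps)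
    show ?thesis unfolding beta mult_minus_left ha hb V_def hx minus_minus by (rule add.commute)
  qed
qed

end
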